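(* For every integer $t\ge 0$, the two-dimensional continued fractions associated to the operators $$A_t=\begin{pmatrix}0&1&0\\0&0&1\\1&1+t&-t-2\end{pmatrix}\quad\text{and}\quad M_t=\begin{pmatrix}0&0&1\\1&0&-t-5\\0&1&t+6\end{pmatrix}$$ are equivalent.
   Context: Let $n\ge1$. Given $n+1$ hyperplanes through the origin of $\mathbb R^{n+1}$ in general position, their complement consists of $2^{n+1}$ open orthants. For each orthant, the sail is the boundary of the convex hull of all integer points, other than the origin, lying in the closure of that orthant; the union of all $2^{n+1}$ sails is the $n$-dimensional continued fraction associated to these hyperplanes. If $A\in GL(n+1,\mathbb Z)$ has characteristic polynomial irreducible over $\mathbb Q$ with all roots real and distinct, the $n+1$ hyperplanes spanned by the subsets of $n$ of its $n+1$ linearly independent eigenvectors are in general position, and the continued fraction they define is called the continued fraction associated to $A$. Two continued fractions are equivalent if there is a linear transformation of $\mathbb R^{n+1}$ preserving the integer lattice $\mathbb Z^{n+1}$ that maps one onto the other. (Here $n=2$; for every $t\ge0$ both matrices have characteristic polynomial irreducible over $\mathbb Q$ with three distinct real roots, so the associated continued fractions are defined.) *)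

theory Defs
  imports "HOL-Analysis.Analysis"
begin

definition int_point :: "real^'n \<Rightarrow> bool" where
  "int_point x \<longleftrightarrow> (\<forall>i. x $ i \<in> \<int>)"

definition eigvecs :: "real^'n^'n \<Rightarrow> (real^'n) set" where
  "eigvecs A = {v. v \<noteq> 0 \<and> (\<exists>l::real. A *v v = l *\<^sub>R v)}"

text \<open>The hyperplanes spanned by n of the n+1 linearly independent eigenvectors
  (here the ambient dimension is CARD('n) = n+1).\<close>
definition eig_hyperplanes :: "real^'n^'n \<Rightarrow> (real^'n) set set" where
  "eig_hyperplanes A =
     {span S | S. S \<subseteq> eigvecs A \<and> independent S \<and> card S = CARD('n) - 1}"

definition orthants :: "(real^'n) set set \<Rightarrow> (real^'n) set set" where
  "orthants Hs = components (UNIV - \<Union>Hs)"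

definition sail :: "(real^'n) set \<Rightarrow> (real^'n) set" where
  "sail C = frontier (convex hull {x. x \<in> closure C \<and> int_point x \<and> x \<noteq> 0})"

definition cont_frac :: "(real^'n) set set \<Rightarrow> (real^'n) set" where
  "cont_frac Hs = (\<Union>C \<in> orthants Hs. sail C)"

definition cont_frac_of_matrix :: "real^'n^'n \<Rightarrow> (real^'n) set" where
  "cont_frac_of_matrix A = cont_frac (eig_hyperplanes A)"

definition lattice_preserving :: "real^'n^'n \<Rightarrow> bool" where
  "lattice_preserving P \<longleftrightarrow> invertible P \<and> (\<forall>i j. P $ i $ j \<in> \<int>)
      \<and> (\<forall>i j. matrix_inv P $ i $ j \<in> \<int>)"

definition cf_equivalent :: "(real^'n) set \<Rightarrow> (real^'n) set \<Rightarrow> bool" where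
  "cf_equivalent X Y \<longleftrightarrow> (\<exists>P. lattice_preserving P \<and> (\<lambda>x. P *v x) ` X = Y)"

definition A_mat :: "nat \<Rightarrow> real^3^3" where
  "A_mat t = vector [vector [0, 1, 0], vector [0, 0, 1],
                     vector [1, 1 + real t, - real t - 2]]"

definition M_mat :: "nat \<Rightarrow> real^3^3" where
  "M_mat t = vector [vector [0, 0, 1], vector [1, 0, - real t - 5],
                     vector [0, 1, real t + 6]]"

end

theory Submission
  imports Defs
begin

lemma mv_inv:
  fixes P Q :: "real^'n^'n"
  assumes "P ** Q = mat 1"
  shows "P *v (Q *v x) = x"
  by (simp add: assms matrix_vector_mul_assoc)

lemma components_lin_image_sub:
  fixes P Q :: "real^'n^'n"
  assumes PQ: "P ** Q = mat 1"
  assumes C: "C \<in> components S"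
  shows "(\<lambda>x. Q *v x) ` C \<in> components ((\<lambda>x. Q *v x) ` S)"
proof -
  let ?f = "\<lambda>x. Q *v x" and ?g = "\<lambda>x. P *v x"
  have lf: "linear ?f" and lg: "linear ?g" by (simp_all add: matrix_vector_mul_linear)
  have gf: "\<And>x. ?g (?f x) = x" using mv_inv[OF PQ] .
  have gfS: "\<And>X. ?g ` (?f ` X) = X" using gf by (simp add: image_image)
  from C have c1: "C \<noteq> {}" "C \<subseteq> S" "connected C"
    and c2: "\<And>D. D \<subseteq> S \<Longrightarrow> connected D \<Longrightarrow> C \<subseteq> D \<Longrightarrow> D = C"
    using in_components_maximal by blast+
  show ?thesis
    unfolding in_components_maximal
  proof (intro conjI allI impI)
    show "?f ` C \<noteq> {}" using c1 by simp
    show "?f ` C \<subseteq> ?f ` S" using c1 by blast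
    show "connected (?f ` C)" using c1 lf connected_linear_image by blast
    fix D assume D0: "D \<noteq> {} \<and> ?f ` C \<subseteq> D \<and> D \<subseteq> ?f ` S \<and> connected D"
    then have D: "D \<subseteq> ?f ` S \<and> connected D \<and> ?f ` C \<subseteq> D" by blast
    have h1: "?g ` D \<subseteq> S" using image_mono[of D "?f ` S" ?g] D gfS[of S] by simp
    have h2: "connected (?g ` D)" using D lg connected_linear_image by blast
    have h3: "C \<subseteq> ?g ` D" using image_mono[of "?f ` C" D ?g] D gfS[of C] by simp
    have h4: "?g ` D = C" using c2[OF h1 h2 h3] .
    have h5: "D = ?f ` (?g ` D)"
    proof -
      have "\<And>y. y \<in> D \<Longrightarrow> ?f (?g y) = y"
      proof -
        fix y assume "y \<in> D"
        then obtain x where "y = ?f x" using D by blast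
        then show "?f (?g y) = y" using gf by simp
      qed
      then show ?thesis by (force simp: image_iff)
    qed
    show "D = ?f ` C" using h5 unfolding h4 .
  qed
qed

lemma components_lin_image:
  fixes P Q :: "real^'n^'n"
  assumes PQ: "P ** Q = mat 1" and QP: "Q ** P = mat 1"
  shows "components ((\<lambda>x. Q *v x) ` S) = (\<lambda>C. (\<lambda>x. Q *v x) ` C) ` components S"
proof
  show "(\<lambda>C. (\<lambda>x. Q *v x) ` C) ` components S \<subseteq> components ((\<lambda>x. Q *v x) ` S)"
    using components_lin_image_sub[OF PQ] by blast
  show "components ((\<lambda>x. Q *v x) ` S) \<subseteq> (\<lambda>C. (\<lambda>x. Q *v x) ` C) ` components S"
  proof
    fix C assume "C \<in> components ((\<lambda>x. Q *v x) ` S)"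
    then have k1: "(\<lambda>x. P *v x) ` C \<in> components ((\<lambda>x. P *v x) ` ((\<lambda>x. Q *v x) ` S))"
      using components_lin_image_sub[OF QP] by blast
    have k2: "(\<lambda>x. P *v x) ` ((\<lambda>x. Q *v x) ` S) = S"
      using mv_inv[OF PQ] by (simp add: image_image)
    have k3: "C = (\<lambda>x. Q *v x) ` ((\<lambda>x. P *v x) ` C)"
      using mv_inv[OF QP] by (simp add: image_image)
    show "C \<in> (\<lambda>C. (\<lambda>x. Q *v x) ` C) ` components S"
      using k3 k1[unfolded k2] by (rule image_eqI)
  qed
qed


lemma int_point_mv:
  fixes Q :: "real^'n^'n"
  assumes "\<forall>i j. Q $ i $ j \<in> \<int>" and "int_point x"
  shows "int_point (Q *v x)"
  using assms unfolding int_point_def matrix_vector_mult_def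
  by (auto intro!: Ints_sum Ints_mult)

lemma int_point_mv_iff:
  fixes P Q :: "real^'n^'n"
  assumes PQ: "P ** Q = mat 1"
    and iP: "\<forall>i j. P $ i $ j \<in> \<int>" and iQ: "\<forall>i j. Q $ i $ j \<in> \<int>"
  shows "int_point (Q *v x) \<longleftrightarrow> int_point x"
  using int_point_mv[OF iQ] int_point_mv[OF iP, of "Q *v x"] mv_inv[OF PQ, of x] by auto

lemma frontier_lin_image:
  fixes P Q :: "real^'n^'n"
  assumes PQ: "P ** Q = mat 1"
  shows "frontier ((\<lambda>x. Q *v x) ` X) = (\<lambda>x. Q *v x) ` frontier X"
proof -
  have lf: "linear (\<lambda>x. Q *v x)" by (simp add: matrix_vector_mul_linear)
  have inj: "inj (\<lambda>x. Q *v x)" by (metis (no_types, lifting) PQ injI mv_inv)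
  show ?thesis unfolding frontier_def
    by (simp add: closure_injective_linear_image[OF lf inj, symmetric]
        interior_injective_linear_image[OF lf inj] image_set_diff[OF inj])
qed

lemma sail_lin_image:
  fixes P Q :: "real^'n^'n"
  assumes PQ: "P ** Q = mat 1"
    and iP: "\<forall>i j. P $ i $ j \<in> \<int>" and iQ: "\<forall>i j. Q $ i $ j \<in> \<int>"
  shows "sail ((\<lambda>x. Q *v x) ` C) = (\<lambda>x. Q *v x) ` sail C"
proof -
  let ?f = "\<lambda>x. Q *v x"
  have lf: "linear ?f" by (simp add: matrix_vector_mul_linear)
  have inj: "inj ?f" by (metis (no_types, lifting) PQ injI mv_inv)
  have z: "?f x = 0 \<longleftrightarrow> x = 0" for x
    using inj by (metis injD matrix_vector_mult_0_right)
  have e: "{x. x \<in> closure (?f ` C) \<and> int_point x \<and> x \<noteq> 0}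
      = ?f ` {x. x \<in> closure C \<and> int_point x \<and> x \<noteq> 0}"
    unfolding closure_injective_linear_image[OF lf inj, symmetric]
    using int_point_mv_iff[OF PQ iP iQ] z by auto
  show ?thesis unfolding sail_def e
    by (simp only: convex_hull_linear_image[OF lf, symmetric] frontier_lin_image[OF PQ])
qed

lemma cont_frac_lin_image:
  fixes P Q :: "real^'n^'n"
  assumes PQ: "P ** Q = mat 1" and QP: "Q ** P = mat 1"
    and iP: "\<forall>i j. P $ i $ j \<in> \<int>" and iQ: "\<forall>i j. Q $ i $ j \<in> \<int>"
  shows "cont_frac ((\<lambda>H. (\<lambda>x. Q *v x) ` H) ` Hs) = (\<lambda>x. Q *v x) ` cont_frac Hs"
proof -
  let ?f = "\<lambda>x. Q *v x"
  have inj: "inj ?f" by (metis (no_types, lifting) PQ injI mv_inv)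
  have surj: "surj ?f" by (metis QP mv_inv surjI)
  have u: "UNIV - \<Union>((\<lambda>H. ?f ` H) ` Hs) = ?f ` (UNIV - \<Union>Hs)"
    by (simp add: image_set_diff[OF inj] image_Union surj)
  have o: "orthants ((\<lambda>H. ?f ` H) ` Hs) = (\<lambda>C. ?f ` C) ` orthants Hs"
    unfolding orthants_def u by (rule components_lin_image[OF PQ QP])
  show ?thesis unfolding cont_frac_def o
    by (simp add: sail_lin_image[OF PQ iP iQ] image_UN)
qed


lemma eig_hyperplanes_lin_image:
  fixes P Q M B :: "real^'n^'n"
  assumes PQ: "P ** Q = mat 1" and QP: "Q ** P = mat 1"
    and E: "eigvecs M = (\<lambda>x. Q *v x) ` eigvecs B"
  shows "eig_hyperplanes M = (\<lambda>H. (\<lambda>x. Q *v x) ` H) ` eig_hyperplanes B"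
proof -
  let ?f = "\<lambda>x. Q *v x" and ?g = "\<lambda>x. P *v x"
  have lf: "linear ?f" and lg: "linear ?g" by (simp_all add: matrix_vector_mul_linear)
  have injf: "inj ?f" by (metis (no_types, lifting) PQ injI mv_inv)
  have injg: "inj ?g" by (metis (no_types, lifting) QP injI mv_inv)
  have gf: "\<And>X. ?g ` (?f ` X) = X" using mv_inv[OF PQ] by (simp add: image_image)
  have fg: "\<And>X. ?f ` (?g ` X) = X" using mv_inv[OF QP] by (simp add: image_image)
  have fwd: "?f ` S \<subseteq> eigvecs M \<and> independent (?f ` S) \<and> card (?f ` S) = CARD('n) - 1"
    if "S \<subseteq> eigvecs B" "independent S" "card S = CARD('n) - 1" for S
  proof -
    have "?f ` S \<subseteq> eigvecs M" using that(1) E by blast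
    moreover have "independent (?f ` S)"
      using linear_independent_injective_image[OF lf that(2)] injf by (simp add: inj_on_subset)
    moreover have "card (?f ` S) = card S" using injf by (simp add: card_image inj_on_subset)
    ultimately show ?thesis using that(3) by simp
  qed
  show ?thesis
  proof
    show "(\<lambda>H. ?f ` H) ` eig_hyperplanes B \<subseteq> eig_hyperplanes M"
    proof
      fix H assume "H \<in> (\<lambda>H. ?f ` H) ` eig_hyperplanes B"
      then obtain S where S: "S \<subseteq> eigvecs B" "independent S" "card S = CARD('n) - 1"
        and H: "H = ?f ` span S" unfolding eig_hyperplanes_def by blast
      have "H = span (?f ` S)" using H by (simp add: linear_span_image[OF lf])
      then show "H \<in> eig_hyperplanes M" unfolding eig_hyperplanes_def using fwd[OF S] by blast
    qed
    show "eig_hyperplanes M \<subseteq> (\<lambda>H. ?f ` H) ` eig_hyperplanes B"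
    proof
      fix H assume "H \<in> eig_hyperplanes M"
      then obtain S where S: "S \<subseteq> eigvecs M" "independent S" "card S = CARD('n) - 1"
        and H: "H = span S" unfolding eig_hyperplanes_def by blast
      have S': "?g ` S \<subseteq> eigvecs B" using S(1) E gf by (metis image_mono)
      have i': "independent (?g ` S)"
        using linear_independent_injective_image[OF lg S(2)] injg by (simp add: inj_on_subset)
      have c': "card (?g ` S) = CARD('n) - 1" using injg S(3) by (simp add: card_image inj_on_subset)
      have "span (?g ` S) \<in> eig_hyperplanes B" unfolding eig_hyperplanes_def using S' i' c' by blast
      moreover have "H = ?f ` span (?g ` S)"
        using H fg by (simp add: linear_span_image[OF lf, symmetric])
      ultimately show "H \<in> (\<lambda>H. ?f ` H) ` eig_hyperplanes B" by blast
    qed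
  qed
qed

lemma eigvecs_conj:
  fixes P Q M B :: "real^'n^'n"
  assumes PQ: "P ** Q = mat 1" and QP: "Q ** P = mat 1"
    and MQ: "M ** Q = Q ** B"
  shows "eigvecs M = (\<lambda>x. Q *v x) ` eigvecs B"
proof -
  have BP: "B ** P = P ** M"
  proof -
    have "B ** P = (P ** Q) ** B ** P" by (simp add: PQ)
    also have "\<dots> = P ** (M ** Q) ** P" by (simp add: MQ matrix_mul_assoc)
    also have "\<dots> = P ** M" by (metis QP matrix_mul_assoc matrix_mul_rid)
    finally show ?thesis .
  qed
  show ?thesis
  proof
    show "(\<lambda>x. Q *v x) ` eigvecs B \<subseteq> eigvecs M"
    proof
      fix y assume "y \<in> (\<lambda>x. Q *v x) ` eigvecs B"
      then obtain v l where v: "v \<noteq> 0" "B *v v = l *\<^sub>R v" and y: "y = Q *v v"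
        unfolding eigvecs_def by blast
      have "y \<noteq> 0" using v(1) y mv_inv[OF PQ, of v] by auto
      moreover have "M *v y = l *\<^sub>R y"
      proof -
        have "M *v y = (M ** Q) *v v" by (simp add: y matrix_vector_mul_assoc)
        also have "\<dots> = Q *v (B *v v)" by (simp add: MQ matrix_vector_mul_assoc)
        also have "\<dots> = l *\<^sub>R y" by (simp add: v(2) y)
          (metis matrix_vector_mul_linear linear_scale)
        finally show ?thesis .
      qed
      ultimately show "y \<in> eigvecs M" unfolding eigvecs_def by blast
    qed
    show "eigvecs M \<subseteq> (\<lambda>x. Q *v x) ` eigvecs B"
    proof
      fix y assume "y \<in> eigvecs M"
      then obtain l where y: "y \<noteq> 0" "M *v y = l *\<^sub>R y" unfolding eigvecs_def by blast
      have "P *v y \<noteq> 0" using y(1) mv_inv[OF QP, of y] by auto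
      moreover have "B *v (P *v y) = l *\<^sub>R (P *v y)"
      proof -
        have "B *v (P *v y) = (B ** P) *v y" by (simp add: matrix_vector_mul_assoc)
        also have "\<dots> = P *v (M *v y)" by (simp add: BP matrix_vector_mul_assoc)
        also have "\<dots> = l *\<^sub>R (P *v y)" by (simp add: y(2))
          (metis matrix_vector_mul_linear linear_scale)
        finally show ?thesis .
      qed
      ultimately have "P *v y \<in> eigvecs B" unfolding eigvecs_def by blast
      moreover have "y = Q *v (P *v y)" using mv_inv[OF QP] by simp
      ultimately show "y \<in> (\<lambda>x. Q *v x) ` eigvecs B" by blast
    qed
  qed
qed

lemma eigvecs_poly_sub:
  fixes A B :: "real^'n^'n"
  assumes "B = a *\<^sub>R mat 1 + b *\<^sub>R A + c *\<^sub>R (A ** A)"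
  shows "eigvecs A \<subseteq> eigvecs B"
proof
  fix v assume "v \<in> eigvecs A"
  then obtain l where v: "v \<noteq> 0" "A *v v = l *\<^sub>R v" unfolding eigvecs_def by blast
  have sc: "\<And>k w. A *v (k *\<^sub>R w) = k *\<^sub>R (A *v w)"
    by (metis matrix_vector_mul_linear linear_scale)
  have sc2: "\<And>k X w. (k *\<^sub>R X::real^'n^'n) *v w = k *\<^sub>R (X *v w)"
    by (simp add: scaleR_matrix_vector_assoc)
  have AA: "(A ** A) *v v = (l * l) *\<^sub>R v" using v(2) sc
    by (simp flip: matrix_vector_mul_assoc)
  have "B *v v = a *\<^sub>R v + b *\<^sub>R (l *\<^sub>R v) + c *\<^sub>R ((l * l) *\<^sub>R v)"
    unfolding assms matrix_vector_mult_add_rdistrib sc2 AA v(2) by simp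
  also have "\<dots> = (a + b * l + c * l * l) *\<^sub>R v" by (simp add: algebra_simps)
  finally have "B *v v = (a + b * l + c * l * l) *\<^sub>R v" .
  then show "v \<in> eigvecs B" using v(1) unfolding eigvecs_def by blast
qed


lemma lattice_preserving_intro:
  fixes P Q :: "real^'n^'n"
  assumes PQ: "P ** Q = mat 1" and QP: "Q ** P = mat 1"
    and iP: "\<forall>i j. P $ i $ j \<in> \<int>" and iQ: "\<forall>i j. Q $ i $ j \<in> \<int>"
  shows "lattice_preserving Q"
proof -
  have inv: "invertible Q" unfolding invertible_def using PQ QP by blast
  have "matrix_inv Q = P"
    unfolding matrix_inv_def
  proof (rule some_equality)
    show "Q ** P = mat 1 \<and> P ** Q = mat 1" using PQ QP by simp
    fix P' assume "Q ** P' = mat 1 \<and> P' ** Q = mat 1"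
    then show "P' = P" by (metis PQ matrix_mul_assoc matrix_mul_lid matrix_mul_rid)
  qed
  then show ?thesis unfolding lattice_preserving_def using inv iP iQ by simp
qed

definition B_mat :: "nat \<Rightarrow> real^3^3" where
  "B_mat t = vector [vector [2, real t + 3, 1], vector [1, real t + 3, 1],
                     vector [1, real t + 2, 1]]"

definition Q_mat :: "nat \<Rightarrow> real^3^3" where
  "Q_mat t = vector [vector [1, real t + 2, - real t - 4], vector [0, - real t - 5, real t + 6],
                     vector [0, 1, -1]]"

definition P_mat :: "nat \<Rightarrow> real^3^3" where
  "P_mat t = vector [vector [1, 2, real t + 8], vector [0, 1, real t + 6],
                     vector [0, 1, real t + 5]]"

lemmas mat3_simps = vec_eq_iff forall_3 matrix_matrix_mult_def sum_3 mat_def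
  A_mat_def M_mat_def B_mat_def Q_mat_def P_mat_def

lemma PQ3: "P_mat t ** Q_mat t = mat 1"
  by (simp add: mat3_simps algebra_simps)

lemma QP3: "Q_mat t ** P_mat t = mat 1"
  by (simp add: mat3_simps algebra_simps)

lemma MQ3: "M_mat t ** Q_mat t = Q_mat t ** B_mat t"
  by (simp add: mat3_simps algebra_simps)

lemma B_poly: "B_mat t = 2 *\<^sub>R mat 1 + (real t + 3) *\<^sub>R A_mat t + 1 *\<^sub>R (A_mat t ** A_mat t)"
  by (simp add: mat3_simps algebra_simps)

lemma A_poly: "A_mat t = (- real t - 4) *\<^sub>R mat 1 + (real t + 6) *\<^sub>R B_mat t
    + (-1) *\<^sub>R (B_mat t ** B_mat t)"
  by (simp add: mat3_simps algebra_simps)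

lemma iP3: "\<forall>i j. P_mat t $ i $ j \<in> \<int>"
  by (simp add: forall_3 P_mat_def)

lemma iQ3: "\<forall>i j. Q_mat t $ i $ j \<in> \<int>"
  by (simp add: forall_3 Q_mat_def)

theorem mainTheorem2:
  fixes t :: nat
  shows "cf_equivalent (cont_frac_of_matrix (A_mat t)) (cont_frac_of_matrix (M_mat t))"
proof -
  have EAB: "eigvecs (B_mat t) = eigvecs (A_mat t)"
    using eigvecs_poly_sub[OF B_poly] eigvecs_poly_sub[OF A_poly] by blast
  have EM: "eigvecs (M_mat t) = (\<lambda>x. Q_mat t *v x) ` eigvecs (A_mat t)"
    using eigvecs_conj[OF PQ3 QP3 MQ3] EAB by simp
  have H: "eig_hyperplanes (M_mat t) = (\<lambda>H. (\<lambda>x. Q_mat t *v x) ` H) ` eig_hyperplanes (A_mat t)"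
    by (rule eig_hyperplanes_lin_image[OF PQ3 QP3 EM])
  have "cont_frac_of_matrix (M_mat t) = (\<lambda>x. Q_mat t *v x) ` cont_frac_of_matrix (A_mat t)"
    unfolding cont_frac_of_matrix_def H by (rule cont_frac_lin_image[OF PQ3 QP3 iP3 iQ3])
  then show ?thesis unfolding cf_equivalent_def
    using lattice_preserving_intro[OF PQ3 QP3 iP3 iQ3] by metis
qed

end
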